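(* Let $R$ be a commutative ring with identity and let $\boldsymbol{a}=(a_0,a_1,a_2,\dots)\in H_R$ with $a_0\in R^*$. Then $\lambda_{+,0}(\boldsymbol{a})=(0,a_0,a_1,\dots)$ is invertible with respect to $\circ$, and $$\boldsymbol{a}^{-1}=\lambda_{-}\big(\lambda_{+,0}(\boldsymbol{a})^{(-1)}\big)\circ\lambda_{+,0}(\boldsymbol{a}),$$ where $\boldsymbol{a}^{-1}$ is the inverse of $\boldsymbol{a}$ for the Hurwitz product and $\boldsymbol{c}^{(-1)}$ denotes the inverse of $\boldsymbol{c}$ for $\circ$.
   Context: $R^*$ is the group of units of $R$. $H_R$ is the set of sequences $\boldsymbol{a}=(a_n)_{n\ge0}$ with $a_n\in R$; we write $\boldsymbol{a}[n]=a_n$. The Hurwitz product is $(\boldsymbol{a}\star\boldsymbol{b})_n=\sum_{h=0}^n\binom{n}{h}a_hb_{n-h}$, with identity $\bar{\boldsymbol{1}}=(1,0,0,\dots)$; $\boldsymbol{a}$ is $\star$-invertible iff $a_0\in R^*$, and $\boldsymbol{a}^{-1}$ denotes its $\star$-inverse. The exponential partial Bell polynomials are $Y_{0,0}=1$, $Y_{n,0}=0$ ($n\ge1$), $Y_{0,k}=0$ ($k\ge1$), and $Y_{n,k}(y_1,y_2,\dots)=\sum \frac{n!}{\prod_i j_i!\,(i!)^{j_i}}\prod_i y_i^{j_i}$, the sum over $(j_1,j_2,\dots)$ of nonnegative integers with $\sum_i j_i=k$, $\sum_i ij_i=n$ (integer coefficients). For $\boldsymbol{a}\in H_R$ and $\boldsymbol{b}\in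 H_R$ with $b_0=0$, the composition product is $(\boldsymbol{a}\circ\boldsymbol{b})_n=\sum_{k=0}^n a_k Y_{n,k}(b_1,\dots,b_{n-k+1})$ (when $\mathbb{Q}\subseteq R$ this is the sequence whose exponential generating function $\sum_n c_nt^n/n!$ is $A(B(t))$, $A,B$ the e.g.f.s of $\boldsymbol a,\boldsymbol b$). Its identity is $\boldsymbol{1}=(0,1,0,0,\dots)$; $\boldsymbol{b}$ is $\circ$-invertible iff $b_0=0$ and $b_1\in R^*$. The shift is $\lambda_-(a_0,a_1,a_2,\dots)=(a_1,a_2,\dots)$ and $\lambda_{+,0}(a_0,a_1,\dots)=(0,a_0,a_1,\dots)$. *)

theory Defs
  imports Main
begin

definition hurwitz_prod :: "(nat \<Rightarrow> 'a::comm_ring_1) \<Rightarrow> (nat \<Rightarrow> 'a) \<Rightarrow> nat \<Rightarrow> 'a" where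
  "hurwitz_prod a b n = (\<Sum>h\<le>n. of_nat (n choose h) * a h * b (n - h))"

definition hurwitz_one :: "nat \<Rightarrow> 'a::comm_ring_1" where
  "hurwitz_one n = (if n = 0 then 1 else 0)"

definition hurwitz_inv :: "(nat \<Rightarrow> 'a::comm_ring_1) \<Rightarrow> nat \<Rightarrow> 'a" where
  "hurwitz_inv a = (SOME c. hurwitz_prod a c = hurwitz_one)"

text \<open>Index set of the exponential partial Bell polynomial Y_{n,k}: tuples (j_1,j_2,...)
  (j_i = 0 for i outside 1..n) with sum j_i = k and sum i*j_i = n.\<close>
definition bell_index :: "nat \<Rightarrow> nat \<Rightarrow> (nat \<Rightarrow> nat) set" where
  "bell_index n k = {j. (\<forall>i. (i < 1 \<or> n < i) \<longrightarrow> j i = 0) \<and> (\<forall>i. j i \<le> n)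
      \<and> (\<Sum>i=1..n. j i) = k \<and> (\<Sum>i=1..n. i * j i) = n}"

definition bell_poly :: "nat \<Rightarrow> nat \<Rightarrow> (nat \<Rightarrow> 'a::comm_ring_1) \<Rightarrow> 'a" where
  "bell_poly n k y = (\<Sum>j\<in>bell_index n k.
      of_nat (fact n div (\<Prod>i=1..n. fact (j i) * fact i ^ j i)) * (\<Prod>i=1..n. y i ^ j i))"

definition comp_prod :: "(nat \<Rightarrow> 'a::comm_ring_1) \<Rightarrow> (nat \<Rightarrow> 'a) \<Rightarrow> nat \<Rightarrow> 'a" where
  "comp_prod a b n = (\<Sum>k\<le>n. a k * bell_poly n k b)"

definition comp_one :: "nat \<Rightarrow> 'a::comm_ring_1" where
  "comp_one n = (if n = 1 then 1 else 0)"

definition comp_invertible :: "(nat \<Rightarrow> 'a::comm_ring_1) \<Rightarrow> bool" where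
  "comp_invertible b \<longleftrightarrow> (\<exists>c. comp_prod b c = comp_one \<and> comp_prod c b = comp_one)"

definition comp_inv :: "(nat \<Rightarrow> 'a::comm_ring_1) \<Rightarrow> nat \<Rightarrow> 'a" where
  "comp_inv b = (SOME c. comp_prod b c = comp_one \<and> comp_prod c b = comp_one)"

definition shift_minus :: "(nat \<Rightarrow> 'a) \<Rightarrow> nat \<Rightarrow> 'a" where
  "shift_minus a n = a (Suc n)"

definition shift_plus0 :: "(nat \<Rightarrow> 'a::zero) \<Rightarrow> nat \<Rightarrow> 'a" where
  "shift_plus0 a n = (if n = 0 then 0 else a (n - 1))"

end

theory Submission
  imports Defs
begin


lemma prod_ext:
  fixes f :: "nat \<Rightarrow> nat \<Rightarrow> 'b::comm_monoid_mult"
  assumes "\<forall>l. l \<notin> {1..n} \<longrightarrow> j l = 0" "n \<le> M" "\<And>l. f l 0 = 1"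
  shows "(\<Prod>l=1..M. f l (j l)) = (\<Prod>l=1..n. f l (j l))"
  by (rule prod.mono_neutral_right) (use assms in auto)

lemma sum_ext:
  fixes f :: "nat \<Rightarrow> nat \<Rightarrow> 'b::comm_monoid_add"
  assumes "\<forall>l. l \<notin> {1..n} \<longrightarrow> j l = 0" "n \<le> M" "\<And>l. f l 0 = 0"
  shows "(\<Sum>l=1..M. f l (j l)) = (\<Sum>l=1..n. f l (j l))"
  by (rule sum.mono_neutral_right) (use assms in auto)

lemma bi_supp: "j \<in> bell_index n k \<Longrightarrow> \<forall>l. l \<notin> {1..n} \<longrightarrow> j l = 0"
  unfolding bell_index_def by (auto simp: not_le[symmetric])

lemma bi_iff: "j \<in> bell_index n k \<longleftrightarrow> (\<forall>l. l \<notin> {1..n} \<longrightarrow> j l = 0) \<and> (\<Sum>i=1..n. j i) = k \<and> (\<Sum>i=1..n. i * j i) = n"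
proof
  assume "j \<in> bell_index n k" then show "(\<forall>l. l \<notin> {1..n} \<longrightarrow> j l = 0) \<and> (\<Sum>i=1..n. j i) = k \<and> (\<Sum>i=1..n. i * j i) = n"
    using bi_supp unfolding bell_index_def by blast
next
  assume H: "(\<forall>l. l \<notin> {1..n} \<longrightarrow> j l = 0) \<and> (\<Sum>i=1..n. j i) = k \<and> (\<Sum>i=1..n. i * j i) = n"
  have "j l \<le> n" for l
  proof (cases "l \<in> {1..n}")
    case True
    then have "j l \<le> l * j l" by simp
    also have "\<dots> \<le> (\<Sum>i=1..n. i * j i)" using True by (intro member_le_sum) auto
    finally show ?thesis using H by simp
  next
    case False then show ?thesis using H by simp
  qed
  moreover have "\<forall>i. (i < 1 \<or> n < i) \<longrightarrow> j i = 0"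
  proof (intro allI impI)
    fix i assume "i < 1 \<or> n < i" then have "i \<notin> {1..n}" by auto
    then show "j i = 0" using H by blast
  qed
  ultimately show "j \<in> bell_index n k" using H unfolding bell_index_def mem_Collect_eq by (intro conjI) auto
qed

lemma finite_bell_index: "finite (bell_index n k)"
proof -
  have "bell_index n k \<subseteq> {f. \<forall>x. (x \<in> {1..n} \<longrightarrow> f x \<in> {0..n}) \<and> (x \<notin> {1..n} \<longrightarrow> f x = 0)}"
  proof (rule subsetI)
    fix f assume f: "f \<in> bell_index n k"
    have "f x \<le> n" for x using f unfolding bell_index_def by blast
    moreover have "x \<notin> {1..n} \<Longrightarrow> f x = 0" for x using bi_supp[OF f] by blast
    ultimately show "f \<in> {f. \<forall>x. (x \<in> {1..n} \<longrightarrow> f x \<in> {0..n}) \<and> (x \<notin> {1..n} \<longrightarrow> f x = 0)}"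
      by simp
  qed
  then show ?thesis by (rule finite_subset) (rule finite_set_of_finite_funs, simp, simp)
qed

lemma two_le_sum:
  fixes f :: "nat \<Rightarrow> nat"
  assumes "finite A" "a \<in> A" "b \<in> A" "a \<noteq> b"
  shows "f a + f b \<le> sum f A"
proof -
  have "sum f {a,b} \<le> sum f A" using assms by (intro sum_mono2) auto
  then show ?thesis using assms by simp
qed

lemma sum_upd:
  fixes f :: "nat \<Rightarrow> 'b::comm_monoid_add"
  assumes "finite A" "a \<in> A"
  shows "sum (\<lambda>l. g l ((j(a := v)) l)) A = g a v + sum (\<lambda>l. g l (j l)) (A - {a})"
proof -
  have "sum (\<lambda>l. g l ((j(a := v)) l)) A = g a v + sum (\<lambda>l. g l ((j(a := v)) l)) (A - {a})"
    using assms by (simp add: sum.remove)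
  also have "sum (\<lambda>l. g l ((j(a := v)) l)) (A - {a}) = sum (\<lambda>l. g l (j l)) (A - {a})"
    by (rule sum.cong) auto
  finally show ?thesis .
qed

lemma sum_split1:
  assumes "finite A" "a \<in> A"
  shows "sum (\<lambda>l. g l (j l)) A = g a (j a) + sum (\<lambda>l. g l (j l)) (A - {a})"
  using assms by (simp add: sum.remove)

lemma prod_upd:
  assumes "finite A" "a \<in> A"
  shows "prod (\<lambda>l. g l ((j(a := v)) l)) A = g a v * prod (\<lambda>l. g l (j l)) (A - {a})"
proof -
  have "prod (\<lambda>l. g l ((j(a := v)) l)) A = g a v * prod (\<lambda>l. g l ((j(a := v)) l)) (A - {a})"
    using assms by (simp add: prod.remove)
  also have "prod (\<lambda>l. g l ((j(a := v)) l)) (A - {a}) = prod (\<lambda>l. g l (j l)) (A - {a})"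
    by (rule prod.cong) auto
  finally show ?thesis .
qed

lemma prod_split1:
  assumes "finite A" "a \<in> A"
  shows "prod (\<lambda>l. g l (j l)) A = g a (j a) * prod (\<lambda>l. g l (j l)) (A - {a})"
  using assms by (simp add: prod.remove)

lemma arith1: "(s'::nat) = y + r \<Longrightarrow> x + r = Suc n \<Longrightarrow> y = x - a \<Longrightarrow> a \<le> x \<Longrightarrow> a = Suc i \<Longrightarrow> s' = n - i"
  by linarith
lemma arith2: "(s'::nat) = (ja - 1) + r \<Longrightarrow> s = ja + r \<Longrightarrow> s = Suc k \<Longrightarrow> 1 \<le> ja \<Longrightarrow> s' = k"
  by linarith

lemma mem_dec:
  assumes j: "j \<in> bell_index (Suc n) (Suc k)" and i: "i \<le> n" and p: "1 \<le> j (Suc i)"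
  shows "j(Suc i := j (Suc i) - 1) \<in> bell_index (n-i) k"
proof -
  define j' where "j' = j(Suc i := j (Suc i) - 1)"
  define a where "a = Suc i"
  have supp: "\<forall>l. l \<notin> {1..Suc n} \<longrightarrow> j l = 0" and S0: "(\<Sum>l=1..Suc n. j l) = Suc k"
    and S1: "(\<Sum>l=1..Suc n. l * j l) = Suc n" using j bi_iff by blast+
  have A: "a \<in> {1..Suc n}" using i a_def by simp
  have j'a: "j' a = j a - 1" and j'o: "\<And>l. l \<noteq> a \<Longrightarrow> j' l = j l" by (auto simp: j'_def a_def)
  have e1: "(\<Sum>l=1..Suc n. l * j' l) = a * (j a - 1) + (\<Sum>l\<in>{1..Suc n} - {a}. l * j l)"
    unfolding j'_def a_def[symmetric] using A by (intro sum_upd[where g="\<lambda>l v. l * v"]) auto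
  have e2: "(\<Sum>l=1..Suc n. l * j l) = a * j a + (\<Sum>l\<in>{1..Suc n} - {a}. l * j l)"
    using A by (intro sum_split1[where g="\<lambda>l v. l * v"]) auto
  have e3: "a * (j a - 1) = a * j a - a" by (simp add: diff_mult_distrib2)
  have e4: "a \<le> a * j a" using p unfolding a_def by (metis mult.right_neutral mult_le_mono2)
  have T1: "(\<Sum>l=1..Suc n. l * j' l) = n - i"
    by (rule arith1[OF e1 trans[OF e2[symmetric] S1] e3 e4 a_def])
  have f1: "(\<Sum>l=1..Suc n. j' l) = (j a - 1) + (\<Sum>l\<in>{1..Suc n} - {a}. j l)"
    unfolding j'_def a_def[symmetric] using A by (intro sum_upd[where g="\<lambda>l v. v"]) auto
  have f2: "(\<Sum>l=1..Suc n. j l) = j a + (\<Sum>l\<in>{1..Suc n} - {a}. j l)"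
    using A by (intro sum_split1[where g="\<lambda>l v. v"]) auto
  have T0: "(\<Sum>l=1..Suc n. j' l) = k"
    by (rule arith2[OF f1 f2 S0]) (use p a_def in simp)
  have supp': "\<forall>l. l \<notin> {1..n-i} \<longrightarrow> j' l = 0"
  proof (intro allI impI)
    fix l assume l: "l \<notin> {1..n-i}"
    show "j' l = 0"
    proof (rule ccontr)
      assume nz: "j' l \<noteq> 0"
      show False
      proof (cases "l \<in> {1..Suc n}")
        case False
        then have "l \<noteq> a" using A by auto
        then show False using nz supp False j'o by simp
      next
        case True
        then have gt: "l > n - i" using l by auto
        show False
        proof (cases "l = a")
          case True
          then have "2 \<le> j a" using nz j'a by simp
          then have "a * 2 \<le> a * j a" by simp
          also have "a * j a \<le> (\<Sum>l=1..Suc n. l * j l)" using A by (intro member_le_sum[where f="\<lambda>l. l * j l"]) auto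
          finally show False using S1 gt True a_def by linarith
        next
          case False
          then have "j l \<ge> 1" using nz j'o by simp
          then have "l \<le> l * j l" by simp
          moreover note e4
          moreover have "l * j l + a * j a \<le> (\<Sum>l=1..Suc n. l * j l)"
            using A True False by (intro two_le_sum[where f="\<lambda>l. l * j l"]) auto
          ultimately show False using S1 gt a_def by linarith
        qed
      qed
    qed
  qed
  have "(\<Sum>l=1..Suc n. j' l) = (\<Sum>l=1..n-i. j' l)"
    using sum_ext[of "n-i" j' "Suc n" "\<lambda>l v. v"] supp' by simp
  moreover have "(\<Sum>l=1..Suc n. l * j' l) = (\<Sum>l=1..n-i. l * j' l)"
    using sum_ext[of "n-i" j' "Suc n" "\<lambda>l v. l * v"] supp' by simp
  ultimately have "(\<Sum>l=1..n-i. j' l) = k" "(\<Sum>l=1..n-i. l * j' l) = n - i" using T0 T1 by simp_all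
  then show ?thesis unfolding j'_def[symmetric] apply (subst bi_iff) using supp' by blast
qed

lemma mem_inc:
  assumes j: "j \<in> bell_index (n-i) k" and i: "i \<le> n"
  shows "j(Suc i := j (Suc i) + 1) \<in> bell_index (Suc n) (Suc k)"
proof -
  define j' where "j' = j(Suc i := j (Suc i) + 1)"
  define a where "a = Suc i"
  have supp: "\<forall>l. l \<notin> {1..n-i} \<longrightarrow> j l = 0" and S0: "(\<Sum>l=1..n-i. j l) = k"
    and S1: "(\<Sum>l=1..n-i. l * j l) = n - i" using j bi_iff by blast+
  have A: "a \<in> {1..Suc n}" using i a_def by simp
  have supp': "\<forall>l. l \<notin> {1..Suc n} \<longrightarrow> j' l = 0"
    using supp A unfolding j'_def a_def[symmetric] by auto
  have S0': "(\<Sum>l=1..Suc n. j l) = k"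
    using sum_ext[of "n-i" j "Suc n" "\<lambda>l v. v"] supp S0 by simp
  have S1': "(\<Sum>l=1..Suc n. l * j l) = n - i"
    using sum_ext[of "n-i" j "Suc n" "\<lambda>l v. l * v"] supp S1 by simp
  have "(\<Sum>l=1..Suc n. l * j' l) = a * (j a + 1) + (\<Sum>l\<in>{1..Suc n} - {a}. l * j l)"
    unfolding j'_def a_def[symmetric] using A by (intro sum_upd[where g="\<lambda>l v. l * v"]) auto
  moreover have "(\<Sum>l=1..Suc n. l * j l) = a * j a + (\<Sum>l\<in>{1..Suc n} - {a}. l * j l)"
    using A by (intro sum_split1[where g="\<lambda>l v. l * v"]) auto
  ultimately have T1: "(\<Sum>l=1..Suc n. l * j' l) = Suc n" using S1' a_def i by (simp add: algebra_simps)
  have "(\<Sum>l=1..Suc n. j' l) = (j a + 1) + (\<Sum>l\<in>{1..Suc n} - {a}. j l)"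
    unfolding j'_def a_def[symmetric] using A by (intro sum_upd[where g="\<lambda>l v. v"]) auto
  moreover have "(\<Sum>l=1..Suc n. j l) = j a + (\<Sum>l\<in>{1..Suc n} - {a}. j l)"
    using A by (intro sum_split1[where g="\<lambda>l v. v"]) auto
  ultimately have T0: "(\<Sum>l=1..Suc n. j' l) = Suc k" using S0' by linarith
  show ?thesis unfolding j'_def[symmetric] apply (subst bi_iff) using T0 T1 supp' by blast
qed

definition Dm :: "(nat \<Rightarrow> nat) \<Rightarrow> nat \<Rightarrow> nat" where
  "Dm j M = (\<Prod>l=1..M. fact (j l) * fact l ^ j l)"
definition Pm :: "(nat \<Rightarrow> 'a::comm_ring_1) \<Rightarrow> (nat \<Rightarrow> nat) \<Rightarrow> nat \<Rightarrow> 'a" where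
  "Pm y j M = (\<Prod>l=1..M. y l ^ j l)"

lemma bell_poly_alt: "bell_poly n k y = (\<Sum>j\<in>bell_index n k. of_nat (fact n div Dm j n) * Pm y j n)"
  unfolding bell_poly_def Dm_def Pm_def ..

lemma D_ext: "\<forall>l. l \<notin> {1..n} \<longrightarrow> j l = 0 \<Longrightarrow> n \<le> M \<Longrightarrow> Dm j M = Dm j n"
  unfolding Dm_def by (rule prod_ext[where f="\<lambda>l v. fact v * fact l ^ v"]) auto

lemma P_ext: "\<forall>l. l \<notin> {1..n} \<longrightarrow> j l = 0 \<Longrightarrow> n \<le> M \<Longrightarrow> Pm y j M = Pm y j n"
  unfolding Pm_def by (rule prod_ext[where f="\<lambda>l v. y l ^ v"]) auto

lemma D_dec:
  assumes "1 \<le> j (Suc i)" "Suc i \<le> M"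
  shows "Dm j M = Dm (j(Suc i := j (Suc i) - 1)) M * j (Suc i) * fact (Suc i)"
proof -
  define a where "a = Suc i"
  have A: "a \<in> {1..M}" using assms a_def by simp
  obtain m where m: "j a = Suc m" using assms a_def by (metis Suc_le_D One_nat_def)
  have "Dm j M = (fact (j a) * fact a ^ j a) * (\<Prod>l\<in>{1..M}-{a}. fact (j l) * fact l ^ j l)"
    unfolding Dm_def using A by (intro prod_split1[where g="\<lambda>l v. fact v * fact l ^ v"]) auto
  moreover have "Dm (j(a := j a - 1)) M = (fact (j a - 1) * fact a ^ (j a - 1)) * (\<Prod>l\<in>{1..M}-{a}. fact (j l) * fact l ^ j l)"
    unfolding Dm_def using A by (intro prod_upd[where g="\<lambda>l v. fact v * fact l ^ v"]) auto
  ultimately show ?thesis unfolding a_def[symmetric] using m by (simp add: algebra_simps)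
qed

lemma P_dec:
  assumes "1 \<le> j (Suc i)" "Suc i \<le> M"
  shows "Pm y j M = y (Suc i) * Pm y (j(Suc i := j (Suc i) - 1)) M"
proof -
  define a where "a = Suc i"
  have A: "a \<in> {1..M}" using assms a_def by simp
  obtain m where m: "j a = Suc m" using assms a_def by (metis Suc_le_D One_nat_def)
  have "Pm y j M = y a ^ j a * (\<Prod>l\<in>{1..M}-{a}. y l ^ j l)"
    unfolding Pm_def using A by (intro prod_split1[where g="\<lambda>l v. y l ^ v"]) auto
  moreover have "Pm y (j(a := j a - 1)) M = y a ^ (j a - 1) * (\<Prod>l\<in>{1..M}-{a}. y l ^ j l)"
    unfolding Pm_def using A by (intro prod_upd[where g="\<lambda>l v. y l ^ v"]) auto
  ultimately show ?thesis unfolding a_def[symmetric] using m by (simp add: algebra_simps)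
qed

lemma coef_rec:
  assumes j: "j \<in> bell_index (Suc n) (Suc k)"
    and IH: "\<And>i. i \<le> n \<Longrightarrow> 1 \<le> j (Suc i) \<Longrightarrow> Dm (j(Suc i := j (Suc i) - 1)) (n-i) dvd fact (n-i)"
  shows "(\<Sum>i\<in>{i\<in>{..n}. 1 \<le> j (Suc i)}. (n choose i) * (fact (n-i) div Dm (j(Suc i := j (Suc i) - 1)) (n-i)))
          * Dm j (Suc n) = fact (Suc n)"
proof -
  have tm: "(n choose i) * (fact (n-i) div Dm (j(Suc i := j (Suc i) - 1)) (n-i)) * Dm j (Suc n)
      = fact n * (Suc i * j (Suc i))" if i: "i \<in> {i\<in>{..n}. 1 \<le> j (Suc i)}" for i
  proof -
    define d where "d = Dm (j(Suc i := j (Suc i) - 1)) (n-i)"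
    have il: "i \<le> n" and p: "1 \<le> j (Suc i)" using i by auto
    have mem: "j(Suc i := j (Suc i) - 1) \<in> bell_index (n-i) k" using mem_dec[OF j il p] .
    have "Dm j (Suc n) = Dm (j(Suc i := j (Suc i) - 1)) (Suc n) * j (Suc i) * fact (Suc i)"
      using D_dec[of j i, OF p] il by simp
    also have "Dm (j(Suc i := j (Suc i) - 1)) (Suc n) = d"
      unfolding d_def by (rule D_ext[OF bi_supp[OF mem]]) (use il in simp)
    finally have Dj: "Dm j (Suc n) = d * j (Suc i) * fact (Suc i)" .
    have dv: "d dvd fact (n-i)" unfolding d_def using IH[OF il p] .
    have "(n choose i) * (fact (n-i) div d) * Dm j (Suc n) = (n choose i) * ((fact (n-i) div d) * d) * (j (Suc i) * fact (Suc i))"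
      unfolding Dj by (simp only: ac_simps)
    also have "(fact (n-i) div d) * d = fact (n-i)" using dv by simp
    also have "(n choose i) * fact (n-i) * (j (Suc i) * fact (Suc i)) = (fact i * fact (n-i) * (n choose i)) * (Suc i * j (Suc i))"
      by (simp only: fact_Suc ac_simps of_nat_id)
    also have "fact i * fact (n-i) * (n choose i) = (fact n :: nat)" using binomial_fact_lemma[OF il] .
    finally show ?thesis unfolding d_def .
  qed
  have "(\<Sum>i\<in>{i\<in>{..n}. 1 \<le> j (Suc i)}. (n choose i) * (fact (n-i) div Dm (j(Suc i := j (Suc i) - 1)) (n-i))) * Dm j (Suc n)
     = (\<Sum>i\<in>{i\<in>{..n}. 1 \<le> j (Suc i)}. fact n * (Suc i * j (Suc i)))"
    unfolding sum_distrib_right using tm by (rule sum.cong[OF refl])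
  also have "\<dots> = (\<Sum>i\<in>{..n}. fact n * (Suc i * j (Suc i)))"
    by (rule sum.mono_neutral_left) auto
  also have "\<dots> = fact n * (\<Sum>i\<in>{..n}. Suc i * j (Suc i))" by (simp add: sum_distrib_left)
  also have "(\<Sum>i\<in>{..n}. Suc i * j (Suc i)) = (\<Sum>l=1..Suc n. l * j l)"
    by (simp only: atMost_atLeast0 One_nat_def sum.shift_bounds_cl_Suc_ivl)
  also have "\<dots> = Suc n" using j bi_iff by blast
  also have "fact n * Suc n = fact (Suc n)" by (simp add: fact_Suc)
  finally show ?thesis .
qed

lemma bi_zero: "bell_index 0 k = (if k = 0 then {\<lambda>_. 0} else {})"
  by (auto simp: bi_iff)

lemma bi_Suc_zero: "bell_index (Suc n) 0 = {}"
proof -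
  have False if "j \<in> bell_index (Suc n) 0" for j
  proof -
    have "(\<Sum>i=1..Suc n. j i) = 0" "(\<Sum>i=1..Suc n. i * j i) = Suc n" using that bi_iff by blast+
    then show False by simp
  qed
  then show ?thesis by blast
qed

lemma D_dvd: "j \<in> bell_index n k \<Longrightarrow> Dm j n dvd fact n"
proof (induction n arbitrary: k j rule: less_induct)
  case (less n)
  show ?case
  proof (cases n)
    case 0 then show ?thesis using less.prems by (auto simp: bi_zero Dm_def)
  next
    case (Suc m)
    then obtain k' where k: "k = Suc k'" using less.prems bi_Suc_zero by (cases k) auto
    have j: "j \<in> bell_index (Suc m) (Suc k')" using less.prems Suc k by simp
    have "Dm (j(Suc i := j (Suc i) - 1)) (m-i) dvd fact (m-i)" if "i \<le> m" "1 \<le> j (Suc i)" for i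
    proof -
      have "m - i < n" using Suc by simp
      from less.IH[OF this mem_dec[OF j that]] show ?thesis .
    qed
    from coef_rec[OF j this] obtain S where "S * Dm j (Suc m) = fact (Suc m)" by blast
    then have "fact (Suc m) = Dm j (Suc m) * S" by (simp add: mult.commute)
    then show ?thesis unfolding Suc by (rule dvdI)
  qed
qed

lemma Dm_pos: "Dm j M > 0"
  unfolding Dm_def by (simp add: fact_gt_zero)

abbreviation dec :: "nat \<Rightarrow> (nat \<Rightarrow> nat) \<Rightarrow> nat \<Rightarrow> nat" where
  "dec i j \<equiv> j(Suc i := j (Suc i) - 1)"

lemma coef_eq:
  assumes j: "j \<in> bell_index (Suc n) (Suc k)"
  shows "fact (Suc n) div Dm j (Suc n) =
    (\<Sum>i\<in>{i\<in>{..n}. 1 \<le> j (Suc i)}. (n choose i) * (fact (n-i) div Dm (dec i j) (n-i)))"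
proof -
  have "Dm (dec i j) (n-i) dvd fact (n-i)" if "i \<le> n" "1 \<le> j (Suc i)" for i
    using D_dvd[OF mem_dec[OF j that]] .
  from coef_rec[OF j this] have "fact (Suc n) = (\<Sum>i\<in>{i\<in>{..n}. 1 \<le> j (Suc i)}. (n choose i) * (fact (n-i) div Dm (dec i j) (n-i))) * Dm j (Suc n)"
    by simp
  then show ?thesis using Dm_pos[of j "Suc n"] by simp
qed

lemma bell_rec:
  "bell_poly (Suc n) (Suc k) y = (\<Sum>i\<le>n. of_nat (n choose i) * y (Suc i) * bell_poly (n-i) k y)"
proof -
  define B where "B = bell_index (Suc n) (Suc k)"
  define F where "F i j = of_nat (n choose i) * y (Suc i) * (of_nat (fact (n-i) div Dm (dec i j) (n-i)) * Pm y (dec i j) (n-i))" for i j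
  have finB: "finite B" unfolding B_def by (rule finite_bell_index)
  have step: "of_nat (fact (Suc n) div Dm j (Suc n)) * Pm y j (Suc n) = (\<Sum>i\<in>{i\<in>{..n}. 1 \<le> j (Suc i)}. F i j)"
    if j: "j \<in> B" for j
  proof -
    have jj: "j \<in> bell_index (Suc n) (Suc k)" using j B_def by simp
    have "of_nat (fact (Suc n) div Dm j (Suc n)) * Pm y j (Suc n) =
      (\<Sum>i\<in>{i\<in>{..n}. 1 \<le> j (Suc i)}. of_nat ((n choose i) * (fact (n-i) div Dm (dec i j) (n-i))) * Pm y j (Suc n))"
      unfolding coef_eq[OF jj] of_nat_sum sum_distrib_right ..
    also have "\<dots> = (\<Sum>i\<in>{i\<in>{..n}. 1 \<le> j (Suc i)}. F i j)"
    proof (rule sum.cong[OF refl])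
      fix i assume i: "i \<in> {i\<in>{..n}. 1 \<le> j (Suc i)}"
      then have il: "i \<le> n" and p: "1 \<le> j (Suc i)" by auto
      have "Pm y j (Suc n) = y (Suc i) * Pm y (dec i j) (Suc n)" using P_dec[where j=j and i=i and M="Suc n" and y=y, OF p] il by simp
      also have "Pm y (dec i j) (Suc n) = Pm y (dec i j) (n-i)"
        by (rule P_ext[OF bi_supp[OF mem_dec[OF jj il p]]]) (use il in simp)
      finally show "of_nat ((n choose i) * (fact (n-i) div Dm (dec i j) (n-i))) * Pm y j (Suc n) = F i j"
        unfolding F_def by (simp add: ac_simps)
    qed
    finally show ?thesis .
  qed
  have "bell_poly (Suc n) (Suc k) y = (\<Sum>j\<in>B. \<Sum>i\<in>{i\<in>{..n}. 1 \<le> j (Suc i)}. F i j)"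
    unfolding bell_poly_alt B_def[symmetric] using step by (rule sum.cong[OF refl])
  also have "\<dots> = (\<Sum>i\<in>{..n}. \<Sum>j\<in>{j\<in>B. 1 \<le> j (Suc i)}. F i j)"
    by (rule sum.swap_restrict[OF finB]) simp
  also have "\<dots> = (\<Sum>i\<le>n. of_nat (n choose i) * y (Suc i) * bell_poly (n-i) k y)"
  proof (rule sum.cong[OF refl])
    fix i assume "i \<in> {..n}" then have il: "i \<le> n" by simp
    have "(\<Sum>j\<in>{j\<in>B. 1 \<le> j (Suc i)}. F i j) = of_nat (n choose i) * y (Suc i) *
       (\<Sum>j\<in>{j\<in>B. 1 \<le> j (Suc i)}. of_nat (fact (n-i) div Dm (dec i j) (n-i)) * Pm y (dec i j) (n-i))"
      unfolding F_def sum_distrib_left ..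
    also have "(\<Sum>j\<in>{j\<in>B. 1 \<le> j (Suc i)}. of_nat (fact (n-i) div Dm (dec i j) (n-i)) * Pm y (dec i j) (n-i))
       = bell_poly (n-i) k y"
      unfolding bell_poly_alt
    proof (rule sum.reindex_bij_witness[where i="\<lambda>j. j(Suc i := j (Suc i) + 1)" and j="dec i"])
      fix a assume "a \<in> {j\<in>B. 1 \<le> j (Suc i)}"
      then show "(dec i a)(Suc i := dec i a (Suc i) + 1) = a" by auto
    next
      fix a assume "a \<in> {j\<in>B. 1 \<le> j (Suc i)}"
      then show "dec i a \<in> bell_index (n - i) k" using mem_dec[OF _ il] B_def by auto
    next
      fix b assume "b \<in> bell_index (n - i) k"
      show "dec i (b(Suc i := b (Suc i) + 1)) = b" by auto
    next
      fix b assume "b \<in> bell_index (n - i) k"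
      then show "b(Suc i := b (Suc i) + 1) \<in> {j\<in>B. 1 \<le> j (Suc i)}" using mem_inc[OF _ il] B_def by auto
    qed simp
    finally show "(\<Sum>j\<in>{j\<in>B. 1 \<le> j (Suc i)}. F i j) = of_nat (n choose i) * y (Suc i) * bell_poly (n-i) k y" .
  qed
  finally show ?thesis .
qed

fun Q :: "(nat \<Rightarrow> 'a::comm_ring_1) \<Rightarrow> nat \<Rightarrow> nat \<Rightarrow> 'a" where
  "Q y 0 k = (if k = 0 then 1 else 0)"
| "Q y (Suc n) 0 = 0"
| "Q y (Suc n) (Suc k) = (\<Sum>i\<le>n. of_nat (n choose i) * y (Suc i) * Q y (n - i) k)"

lemma bell_Q: "bell_poly n k y = Q y n k"
proof (induction n arbitrary: k rule: less_induct)
  case (less n)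
  show ?case
  proof (cases n)
    case 0 then show ?thesis by (simp add: bell_poly_alt bi_zero Dm_def Pm_def)
  next
    case (Suc m)
    show ?thesis
    proof (cases k)
      case 0 then show ?thesis using Suc by (simp add: bell_poly_alt bi_Suc_zero)
    next
      case (Suc k')
      show ?thesis unfolding Suc \<open>n = Suc m\<close> bell_rec Q.simps
        by (rule sum.cong[OF refl]) (use less.IH \<open>n = Suc m\<close> in simp)
    qed
  qed
qed



lemma hp_0: "hurwitz_prod a b 0 = a 0 * b 0"
  by (simp add: hurwitz_prod_def)

lemma hp_comm: "hurwitz_prod a b = hurwitz_prod b a"
proof (rule ext)
  fix n
  have "hurwitz_prod a b n = (\<Sum>h=0..n. of_nat (n choose h) * a h * b (n - h))"
    unfolding hurwitz_prod_def atMost_atLeast0 ..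
  also have "\<dots> = (\<Sum>h=0..n. of_nat (n choose (n + 0 - h)) * a (n + 0 - h) * b (n - (n + 0 - h)))"
    by (rule sum.atLeastAtMost_rev)
  also have "\<dots> = (\<Sum>h=0..n. of_nat (n choose h) * b h * a (n - h))"
    by (rule sum.cong[OF refl]) (auto simp: binomial_symmetric[symmetric] ac_simps)
  also have "\<dots> = hurwitz_prod b a n"
    unfolding hurwitz_prod_def atMost_atLeast0 ..
  finally show "hurwitz_prod a b n = hurwitz_prod b a n" .
qed

lemma hp_Suc: "hurwitz_prod a b (Suc n) = hurwitz_prod (shift_minus a) b n + hurwitz_prod a (shift_minus b) n"
proof -
  have "hurwitz_prod a b (Suc n) = a 0 * b (Suc n) + (\<Sum>h\<le>n. of_nat (Suc n choose Suc h) * a (Suc h) * b (n - h))"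
    unfolding hurwitz_prod_def by (subst sum.atMost_Suc_shift) simp
  also have "\<dots> = a 0 * b (Suc n) + (\<Sum>h\<le>n. of_nat (n choose Suc h) * a (Suc h) * b (n - h))
       + (\<Sum>h\<le>n. of_nat (n choose h) * a (Suc h) * b (n - h))"
    by (simp add: sum.distrib algebra_simps)
  also have "(\<Sum>h\<le>n. of_nat (n choose h) * a (Suc h) * b (n - h)) = hurwitz_prod (shift_minus a) b n"
    unfolding hurwitz_prod_def shift_minus_def ..
  also have "a 0 * b (Suc n) + (\<Sum>h\<le>n. of_nat (n choose Suc h) * a (Suc h) * b (n - h)) = hurwitz_prod a (shift_minus b) n"
  proof (cases n)
    case 0 then show ?thesis by (simp add: hurwitz_prod_def shift_minus_def)
  next
    case (Suc m)
    have "(\<Sum>h\<le>n. of_nat (n choose Suc h) * a (Suc h) * b (n - h)) = (\<Sum>h\<le>m. of_nat (n choose Suc h) * a (Suc h) * b (n - h))"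
      unfolding Suc by (simp only: sum.atMost_Suc) (simp add: binomial_eq_0 del: binomial_Suc_Suc)
    also have "\<dots> = (\<Sum>h\<le>m. of_nat (n choose Suc h) * a (Suc h) * b (Suc (n - Suc h)))"
      by (rule sum.cong[OF refl]) (simp add: Suc Suc_diff_le)
    finally have e: "(\<Sum>h\<le>n. of_nat (n choose Suc h) * a (Suc h) * b (n - h)) = (\<Sum>h\<le>m. of_nat (n choose Suc h) * a (Suc h) * b (Suc (n - Suc h)))" .
    have "hurwitz_prod a (shift_minus b) n = a 0 * b (Suc n) + (\<Sum>h\<le>m. of_nat (n choose Suc h) * a (Suc h) * b (Suc (n - Suc h)))"
      unfolding hurwitz_prod_def shift_minus_def Suc by (subst sum.atMost_Suc_shift) simp
    then show ?thesis using e by simp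
  qed
  finally have "hurwitz_prod a b (Suc n) = hurwitz_prod a (shift_minus b) n + hurwitz_prod (shift_minus a) b n" .
  then show ?thesis by (simp only: add.commute)
qed

lemma hp_add_left: "hurwitz_prod (\<lambda>m. f m + g m) c n = hurwitz_prod f c n + hurwitz_prod g c n"
  unfolding hurwitz_prod_def by (simp add: sum.distrib algebra_simps)

lemma hp_add_right: "hurwitz_prod c (\<lambda>m. f m + g m) n = hurwitz_prod c f n + hurwitz_prod c g n"
  unfolding hurwitz_prod_def by (simp add: sum.distrib algebra_simps)

lemma hp_local:
  assumes "\<And>m. m \<le> n \<Longrightarrow> a m = a' m" "\<And>m. m \<le> n \<Longrightarrow> b m = b' m"
  shows "hurwitz_prod a b n = hurwitz_prod a' b' n"
  unfolding hurwitz_prod_def using assms by (intro sum.cong) auto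

lemma shift_hp: "shift_minus (hurwitz_prod a b) = (\<lambda>n. hurwitz_prod (shift_minus a) b n + hurwitz_prod a (shift_minus b) n)"
  by (rule ext) (simp add: shift_minus_def hp_Suc)

lemma hp_assoc: "hurwitz_prod (hurwitz_prod a b) c = hurwitz_prod a (hurwitz_prod b c)"
proof (rule ext)
  fix n show "hurwitz_prod (hurwitz_prod a b) c n = hurwitz_prod a (hurwitz_prod b c) n"
  proof (induction n arbitrary: a b c)
    case 0 then show ?case by (simp add: hp_0)
  next
    case (Suc n)
    have "hurwitz_prod (hurwitz_prod a b) c (Suc n) =
       hurwitz_prod (hurwitz_prod (shift_minus a) b) c n + hurwitz_prod (hurwitz_prod a (shift_minus b)) c n
       + hurwitz_prod (hurwitz_prod a b) (shift_minus c) n"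
      by (simp add: hp_Suc shift_hp hp_add_left)
    also have "\<dots> = hurwitz_prod (shift_minus a) (hurwitz_prod b c) n + hurwitz_prod a (hurwitz_prod (shift_minus b) c) n
       + hurwitz_prod a (hurwitz_prod b (shift_minus c)) n"
      using Suc by simp
    also have "\<dots> = hurwitz_prod a (hurwitz_prod b c) (Suc n)"
      by (simp add: hp_Suc shift_hp hp_add_right add.assoc)
    finally show ?case .
  qed
qed

lemma hp_one: "hurwitz_prod hurwitz_one a = a"
proof (rule ext)
  fix x
  have "hurwitz_prod hurwitz_one a x = (\<Sum>h\<le>x. (if h = 0 then a x else 0))"
    unfolding hurwitz_prod_def hurwitz_one_def by (rule sum.cong) auto
  then show "hurwitz_prod hurwitz_one a x = a x" by simp
qed

lemma hp_one_right: "hurwitz_prod a hurwitz_one = a"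
  using hp_one hp_comm by metis

lemma hinv_unique:
  assumes "hurwitz_prod a x = hurwitz_one"
  shows "hurwitz_inv a = x"
proof -
  have ex: "\<exists>c. hurwitz_prod a c = hurwitz_one" using assms by blast
  have c: "hurwitz_prod a (hurwitz_inv a) = hurwitz_one"
    unfolding hurwitz_inv_def using someI_ex[OF ex] .
  have "hurwitz_inv a = hurwitz_prod (hurwitz_inv a) (hurwitz_prod a x)" by (simp add: assms hp_one_right)
  also have "\<dots> = hurwitz_prod (hurwitz_prod (hurwitz_inv a) a) x" by (simp only: hp_assoc)
  also have "\<dots> = hurwitz_prod (hurwitz_prod a (hurwitz_inv a)) x" by (subst hp_comm[of "hurwitz_inv a"]) (rule refl)
  also have "\<dots> = x" by (simp add: c hp_one)
  finally show ?thesis .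
qed



abbreviation S where "S \<equiv> shift_minus"

lemma cp_Q: "comp_prod f g n = (\<Sum>k\<le>n. f k * Q g n k)"
  unfolding comp_prod_def bell_Q ..

lemma Q_gt: "n < k \<Longrightarrow> Q g n k = 0"
proof (induction n arbitrary: k rule: less_induct)
  case (less n)
  show ?case
  proof (cases n)
    case 0 then show ?thesis using less.prems by simp
  next
    case (Suc m)
    obtain k' where k: "k = Suc k'" using less.prems by (cases k) auto
    have "Q g (m - i) k' = 0" for i using less.IH[of "m - i" k'] less.prems Suc k by simp
    then show ?thesis unfolding k Suc by simp
  qed
qed

lemma Q_pos0: "0 < n \<Longrightarrow> Q g n 0 = 0"
  by (cases n) auto

lemma Q_nn: "Q g n n = g 1 ^ n"
proof (induction n)
  case 0 then show ?case by simp
next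
  case (Suc n)
  have "Q g (Suc n) (Suc n) = (\<Sum>i\<le>n. (if i = 0 then g 1 * Q g n n else 0))"
    by (subst Q.simps, rule sum.cong[OF refl]) (auto simp: Q_gt)
  then show ?case using Suc by simp
qed

lemma chain: "comp_prod f g (Suc n) = hurwitz_prod (comp_prod (S f) g) (S g) n"
proof -
  have "comp_prod f g (Suc n) = (\<Sum>k\<le>n. f (Suc k) * Q g (Suc n) (Suc k))"
    unfolding cp_Q by (subst sum.atMost_Suc_shift) simp
  also have "\<dots> = (\<Sum>k\<le>n. \<Sum>i\<le>n. of_nat (n choose i) * S g i * (S f k * Q g (n - i) k))"
    by (simp add: sum_distrib_left shift_minus_def ac_simps)
  also have "\<dots> = (\<Sum>i\<le>n. \<Sum>k\<le>n. of_nat (n choose i) * S g i * (S f k * Q g (n - i) k))"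
    by (rule sum.swap)
  also have "\<dots> = (\<Sum>i\<le>n. of_nat (n choose i) * S g i * comp_prod (S f) g (n - i))"
  proof (rule sum.cong[OF refl])
    fix i assume "i \<in> {..n}"
    have "comp_prod (S f) g (n - i) = (\<Sum>k\<le>n. S f k * Q g (n - i) k)"
      unfolding cp_Q by (rule sum.mono_neutral_left) (auto simp: Q_gt)
    then show "(\<Sum>k\<le>n. of_nat (n choose i) * S g i * (S f k * Q g (n - i) k)) = of_nat (n choose i) * S g i * comp_prod (S f) g (n - i)"
      by (simp add: sum_distrib_left)
  qed
  also have "\<dots> = hurwitz_prod (S g) (comp_prod (S f) g) n"
    unfolding hurwitz_prod_def ..
  also have "\<dots> = hurwitz_prod (comp_prod (S f) g) (S g) n"
    by (simp only: hp_comm)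
  finally show ?thesis .
qed

lemma chain_fun: "S (comp_prod f g) = hurwitz_prod (comp_prod (S f) g) (S g)"
  by (rule ext) (simp add: shift_minus_def chain)

lemma cp_0: "comp_prod f g 0 = f 0"
  by (simp add: cp_Q)

lemma cp_add: "comp_prod (\<lambda>m. u m + v m) h n = comp_prod u h n + comp_prod v h n"
  unfolding cp_Q by (simp add: sum.distrib algebra_simps)

lemma cp_mult: "comp_prod (hurwitz_prod u v) h n = hurwitz_prod (comp_prod u h) (comp_prod v h) n"
proof (induction n arbitrary: u v rule: less_induct)
  case (less n)
  show ?case
  proof (cases n)
    case 0 then show ?thesis by (simp add: cp_0 hp_0)
  next
    case (Suc m)
    define X where "X = hurwitz_prod (comp_prod (S u) h) (comp_prod v h)"
    define Y where "Y = hurwitz_prod (comp_prod u h) (comp_prod (S v) h)"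
    have "comp_prod (hurwitz_prod u v) h (Suc m) = hurwitz_prod (comp_prod (S (hurwitz_prod u v)) h) (S h) m"
      by (rule chain)
    also have "\<dots> = hurwitz_prod (\<lambda>k. X k + Y k) (S h) m"
    proof (rule hp_local)
      fix k assume "k \<le> m"
      then have "k < n" using Suc by simp
      then show "comp_prod (S (hurwitz_prod u v)) h k = X k + Y k"
        unfolding shift_hp cp_add X_def Y_def using less.IH by simp
    qed simp
    also have "\<dots> = hurwitz_prod X (S h) m + hurwitz_prod Y (S h) m" by (rule hp_add_left)
    also have "\<dots> = hurwitz_prod (comp_prod u h) (comp_prod v h) (Suc m)"
      unfolding hp_Suc chain_fun X_def Y_def
      by (simp only: hp_assoc hp_comm[of "S h"])
    finally show ?thesis unfolding Suc .
  qed
qed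

lemma cp_mult_fun: "comp_prod (hurwitz_prod u v) h = hurwitz_prod (comp_prod u h) (comp_prod v h)"
  by (rule ext) (rule cp_mult)

lemma cp_assoc: "comp_prod (comp_prod f g) h n = comp_prod f (comp_prod g h) n"
proof (induction n arbitrary: f rule: less_induct)
  case (less n)
  show ?case
  proof (cases n)
    case 0 then show ?thesis by (simp add: cp_0)
  next
    case (Suc m)
    have "comp_prod (comp_prod f g) h (Suc m) = hurwitz_prod (hurwitz_prod (comp_prod (comp_prod (S f) g) h) (comp_prod (S g) h)) (S h) m"
      unfolding chain chain_fun cp_mult_fun ..
    also have "\<dots> = hurwitz_prod (hurwitz_prod (comp_prod (S f) (comp_prod g h)) (comp_prod (S g) h)) (S h) m"
    proof (rule hp_local)
      fix k assume "k \<le> m"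
      show "hurwitz_prod (comp_prod (comp_prod (S f) g) h) (comp_prod (S g) h) k =
            hurwitz_prod (comp_prod (S f) (comp_prod g h)) (comp_prod (S g) h) k"
      proof (rule hp_local)
        fix l assume "l \<le> k"
        then have "l < n" using Suc \<open>k \<le> m\<close> by simp
        then show "comp_prod (comp_prod (S f) g) h l = comp_prod (S f) (comp_prod g h) l" using less.IH by simp
      qed simp
    qed simp
    also have "\<dots> = comp_prod f (comp_prod g h) (Suc m)"
      unfolding chain chain_fun by (simp only: hp_assoc)
    finally show ?thesis unfolding Suc .
  qed
qed

lemma cp_assoc_fun: "comp_prod (comp_prod f g) h = comp_prod f (comp_prod g h)"
  by (rule ext) (rule cp_assoc)

lemma Q_one: "Q (comp_one :: nat \<Rightarrow> 'a::comm_ring_1) n k = (if n = k then 1 else 0)"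
proof (induction n arbitrary: k)
  case 0 then show ?case by simp
next
  case (Suc n)
  note IH = Suc.IH
  show ?case
  proof (cases k)
    case 0 then show ?thesis by simp
  next
    case (Suc k')
    have "Q (comp_one :: nat \<Rightarrow> 'a) (Suc n) (Suc k') = (\<Sum>i\<le>n. (if i = 0 then Q comp_one n k' else 0))"
      by (subst Q.simps, rule sum.cong[OF refl]) (auto simp: comp_one_def)
    also have "\<dots> = Q comp_one n k'" by simp
    also have "\<dots> = (if n = k' then 1 else 0)" using IH by simp
    finally show ?thesis unfolding \<open>k = Suc k'\<close> by simp
  qed
qed

lemma cp_one_right: "comp_prod f comp_one = f"
proof (rule ext)
  fix n
  have "comp_prod f comp_one n = (\<Sum>k\<le>n. (if k = n then f n else 0))"
    unfolding cp_Q by (rule sum.cong) (auto simp: Q_one)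
  then show "comp_prod f comp_one n = f n" by simp
qed

lemma cp_one_left: assumes "g 0 = 0" shows "comp_prod comp_one g = g"
proof (rule ext)
  fix n
  show "comp_prod comp_one g n = g n"
  proof (cases n)
    case 0 then show ?thesis using assms by (simp add: cp_Q comp_one_def)
  next
    case (Suc m)
    have "comp_prod comp_one g n = (\<Sum>k\<le>n. (if k = 1 then Q g n 1 else 0))"
      unfolding cp_Q by (rule sum.cong) (auto simp: comp_one_def)
    also have "\<dots> = Q g (Suc m) (Suc 0)" using Suc by simp
    also have "\<dots> = (\<Sum>i\<le>m. (if i = m then g n else 0))"
      unfolding Suc by (subst Q.simps, rule sum.cong[OF refl]) (auto simp: Q_pos0)
    also have "\<dots> = g n" by simp
    finally show ?thesis .
  qed
qed



fun linv :: "'a \<Rightarrow> (nat \<Rightarrow> 'a::comm_ring_1) \<Rightarrow> nat \<Rightarrow> 'a" where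
  "linv u b n = (if n = 0 then 0 else u ^ n * (comp_one n - (\<Sum>k<n. linv u b k * Q b n k)))"

declare linv.simps[simp del]

lemma linv_left:
  assumes "b 1 * u = 1"
  shows "comp_prod (linv u b) b = comp_one"
proof (rule ext)
  fix n
  show "comp_prod (linv u b) b n = comp_one n"
  proof (cases "n = 0")
    case True then show ?thesis by (simp add: cp_Q linv.simps comp_one_def)
  next
    case False
    have "comp_prod (linv u b) b n = (\<Sum>k<n. linv u b k * Q b n k) + linv u b n * Q b n n"
      unfolding cp_Q lessThan_Suc_atMost[symmetric] sum.lessThan_Suc ..
    also have "linv u b n * Q b n n = (b 1 * u) ^ n * (comp_one n - (\<Sum>k<n. linv u b k * Q b n k))"
      using False by (subst linv.simps) (simp add: Q_nn power_mult_distrib ac_simps)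
    finally show ?thesis using assms by simp
  qed
qed

lemma linv_1: "linv u b 1 = u"
  by (subst linv.simps) (simp add: linv.simps comp_one_def)

lemma linv_0: "linv u b 0 = 0"
  by (simp add: linv.simps)

theorem mainTheorem1:
  fixes a :: "nat \<Rightarrow> 'a::comm_ring_1"
  assumes "a 0 dvd 1"
  shows "comp_invertible (shift_plus0 a)
    \<and> hurwitz_inv a = comp_prod (shift_minus (comp_inv (shift_plus0 a))) (shift_plus0 a)"
proof -
  obtain u where u: "1 = a 0 * u" using assms by (rule dvdE)
  define b where "b = shift_plus0 a"
  have b0: "b 0 = 0" and b1: "b 1 = a 0" and Sb: "S b = a"
    by (auto simp: b_def shift_plus0_def shift_minus_def)
  define d where "d = linv u b"
  have db: "comp_prod d b = comp_one" unfolding d_def by (rule linv_left) (simp add: b_def shift_plus0_def u)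
  define e where "e = linv (a 0) d"
  have ed: "comp_prod e d = comp_one" unfolding e_def
    by (rule linv_left) (simp only: d_def linv_1 One_nat_def[symmetric] u mult.commute)
  have "e = comp_prod e (comp_prod d b)" by (simp add: db cp_one_right)
  also have "\<dots> = comp_prod (comp_prod e d) b" by (simp add: cp_assoc_fun)
  also have "\<dots> = b" by (simp add: ed cp_one_left b0)
  finally have "e = b" .
  then have bd: "comp_prod b d = comp_one" using ed by simp
  have ex: "\<exists>c. comp_prod b c = comp_one \<and> comp_prod c b = comp_one" using bd db by blast
  then have inv: "comp_invertible b" unfolding comp_invertible_def .
  define c where "c = comp_inv b"
  have cb: "comp_prod c b = comp_one" using someI_ex[OF ex] unfolding c_def comp_inv_def by blast
  have "S (comp_prod c b) = hurwitz_prod (comp_prod (S c) b) a" by (simp add: chain_fun Sb)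
  moreover have "S (comp_one :: nat \<Rightarrow> 'a) = hurwitz_one"
    by (rule ext) (simp add: shift_minus_def comp_one_def hurwitz_one_def)
  ultimately have "hurwitz_prod (comp_prod (S c) b) a = hurwitz_one" using cb by simp
  then have "hurwitz_prod a (comp_prod (S c) b) = hurwitz_one" by (simp add: hp_comm)
  then have "hurwitz_inv a = comp_prod (S c) b" by (rule hinv_unique)
  then show ?thesis using inv unfolding b_def c_def by simp
qed


end
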